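(* Let $\mathbb G=V_1\times V_2$ be a step-two Carnot group and let $f\in\mathcal A_h(\mathbb G)$. Assume in addition that $f$ is $V_2$-affine, i.e. for every $(x,z)\in\mathbb G$ and $z'\in V_2$ the map $t\in\mathbb R\mapsto f(x,z+tz')$ is affine. Then there are an affine map $a\in\mathcal A(V_1\times V_2)$ and a bilinear map $b:V_1\times V_2\to\mathbb R$ such that $b(x,[x,x'])=0$ for all $x,x'\in V_1$ and $f(x,z)=a(x,z)+b(x,z)$ for all $(x,z)\in\mathbb G$.
   Context: A step-two Carnot group is $\mathbb G=V_1\times V_2$, where $V_1,V_2$ are finite-dimensional real vector spaces with $V_2\neq\{0\}$, equipped with a bilinear skew-symmetric map $[\cdot,\cdot]:V_1\times V_1\to V_2$ with $\operatorname{span}\{[x,x']:x,x'\in V_1\}=V_2$, and group law $(x,z)\cdot(x',z')=(x+x',z+z'+[x,x'])$. $\mathcal A_h(\mathbb G)$ is the space of $h$-affine maps $f:\mathbb G\to\mathbb R$, i.e. such that for all $(x,z)\in\mathbb G$, $y\in V_1$, $t\mapsto f((x,z)\cdot(ty,0))$ is affine. $\mathcal A(V_1\times V_2)$ denotes the maps affine in the usual sense on the vector space $V_1\times V_2$. *)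

theory Defs
  imports "HOL-Analysis.Analysis"
begin

text \<open>V1, V2 are finite-dimensional real vector spaces (euclidean_space types;
  such types are never the zero space, so V2 \<noteq> {0} holds automatically).\<close>
definition step2_carnot :: "('a::euclidean_space \<Rightarrow> 'a \<Rightarrow> 'b::euclidean_space) \<Rightarrow> bool" where
  "step2_carnot br \<longleftrightarrow> bilinear br \<and> (\<forall>x y. br x y = - br y x)
     \<and> span {br x y | x y. True} = UNIV"

definition carnot_mult :: "('a::euclidean_space \<Rightarrow> 'a \<Rightarrow> 'b::euclidean_space)
   \<Rightarrow> 'a \<times> 'b \<Rightarrow> 'a \<times> 'b \<Rightarrow> 'a \<times> 'b" where
  "carnot_mult br p q = (fst p + fst q, snd p + snd q + br (fst p) (fst q))"

definition affine_fun_real :: "(real \<Rightarrow> real) \<Rightarrow> bool" where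
  "affine_fun_real g \<longleftrightarrow> (\<exists>\<alpha> \<beta>. \<forall>t. g t = \<alpha> * t + \<beta>)"

definition affine_map :: "('v::real_vector \<Rightarrow> real) \<Rightarrow> bool" where
  "affine_map a \<longleftrightarrow> (\<exists>l c. linear l \<and> (\<forall>p. a p = l p + c))"

definition h_affine :: "('a::euclidean_space \<Rightarrow> 'a \<Rightarrow> 'b::euclidean_space)
   \<Rightarrow> ('a \<times> 'b \<Rightarrow> real) \<Rightarrow> bool" where
  "h_affine br f \<longleftrightarrow> (\<forall>p y. affine_fun_real (\<lambda>t. f (carnot_mult br p (t *\<^sub>R y, 0))))"

definition V2_affine :: "('a::euclidean_space \<times> 'b::euclidean_space \<Rightarrow> real) \<Rightarrow> bool" where
  "V2_affine f \<longleftrightarrow> (\<forall>x z z'. affine_fun_real (\<lambda>t. f (x, z + t *\<^sub>R z')))"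

end

theory Submission
  imports Defs
begin

lemma aff_eval: "affine_fun_real g \<Longrightarrow> g t = g 0 + t * (g 1 - g 0)"
  unfolding affine_fun_real_def by auto

lemma aff_diff: "affine_fun_real g \<Longrightarrow> affine_fun_real h \<Longrightarrow> affine_fun_real (\<lambda>t. g t - h t)"
proof -
  assume a: "affine_fun_real g" "affine_fun_real h"
  have "\<forall>t. g t - h t = (g 1 - g 0 - (h 1 - h 0)) * t + (g 0 - h 0)"
  proof
    fix t
    have e1: "g t = g 0 + t * (g 1 - g 0)" by (rule aff_eval[OF a(1)])
    have e2: "h t = h 0 + t * (h 1 - h 0)" by (rule aff_eval[OF a(2)])
    show "g t - h t = (g 1 - g 0 - (h 1 - h 0)) * t + (g 0 - h 0)"
      by (simp only: e1 e2) (simp add: algebra_simps)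
  qed
  then show ?thesis unfolding affine_fun_real_def by blast
qed

lemma aff_sub_lin: "affine_fun_real g \<Longrightarrow> affine_fun_real (\<lambda>t. g t - k * t)"
proof -
  assume "affine_fun_real g"
  moreover have "affine_fun_real (\<lambda>t. k * t)" unfolding affine_fun_real_def
    by (rule exI[of _ k], rule exI[of _ 0]) simp
  ultimately show ?thesis by (rule aff_diff)
qed

lemma half_eq: fixes z w :: "'v::real_vector"
  shows "z + (1/2) *\<^sub>R (w - z) = (1/2) *\<^sub>R (z + w)"
proof -
  have "(1/2) *\<^sub>R z + (1/2) *\<^sub>R z = ((1/2) + (1/2)) *\<^sub>R z" by (rule scaleR_add_left[symmetric])
  then have h: "(1/2) *\<^sub>R z + (1/2) *\<^sub>R z = z" by simp
  have "z + (1/2) *\<^sub>R (w - z) = ((1/2) *\<^sub>R z + (1/2) *\<^sub>R z) + (1/2) *\<^sub>R w - (1/2) *\<^sub>R z"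
    unfolding h by (simp add: scaleR_diff_right)
  also have "\<dots> = (1/2) *\<^sub>R (z + w)" by (simp add: scaleR_add_right)
  finally show ?thesis .
qed

lemma lines_linear:
  fixes g :: "'v::real_vector \<Rightarrow> real"
  assumes A: "\<And>p u. affine_fun_real (\<lambda>t. g (p + t *\<^sub>R u))"
  shows "linear (\<lambda>z. g z - g 0)"
proof (rule linearI)
  fix r and b :: 'v
  have "g (0 + r *\<^sub>R b) = g (0 + 0 *\<^sub>R b) + r * (g (0 + 1 *\<^sub>R b) - g (0 + 0 *\<^sub>R b))"
    using aff_eval[OF A[of 0 b]] .
  then show "g (r *\<^sub>R b) - g 0 = r *\<^sub>R (g b - g 0)" by simp
next
  fix z w :: 'v
  have 1: "g (z + (1/2) *\<^sub>R (w - z)) = g (z + 0 *\<^sub>R (w - z)) + (1/2) * (g (z + 1 *\<^sub>R (w - z)) - g (z + 0 *\<^sub>R (w - z)))"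
    using aff_eval[OF A[of z "w - z"]] .
  have 2: "g (0 + (1/2) *\<^sub>R (z + w)) = g (0 + 0 *\<^sub>R (z + w)) + (1/2) * (g (0 + 1 *\<^sub>R (z + w)) - g (0 + 0 *\<^sub>R (z + w)))"
    using aff_eval[OF A[of 0 "z + w"]] .
  have h1: "g ((1/2) *\<^sub>R (z+w)) = g z + (1/2) * (g w - g z)" using 1 unfolding half_eq by simp
  have h2: "g ((1/2) *\<^sub>R (z+w)) = g 0 + (1/2) * (g (z+w) - g 0)" using 2 by simp
  show "g (z + w) - g 0 = g z - g 0 + (g w - g 0)" using h1 h2 unfolding right_diff_distrib by linarith
qed

theorem proposition3p4:
  fixes br :: "'a::euclidean_space \<Rightarrow> 'a \<Rightarrow> 'b::euclidean_space"
    and f :: "'a \<times> 'b \<Rightarrow> real"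
  assumes "step2_carnot br"
    and "h_affine br f"
    and "V2_affine f"
  shows "\<exists>a b. affine_map a \<and> bilinear b
           \<and> (\<forall>x x'. b x (br x x') = 0)
           \<and> (\<forall>x z. f (x, z) = a (x, z) + b x z)"
proof -
  have bl: "bilinear br" and sk: "\<And>x y. br x y = - br y x"
    using assms(1) unfolding step2_carnot_def by blast+
  have brr: "br x x = 0" for x
  proof -
    have "br x x + br x x = 0" using sk[of x x] eq_neg_iff_add_eq_0 by blast
    then have "2 *\<^sub>R br x x = 0" by (simp add: scaleR_2)
    then show ?thesis by simp
  qed
  have cm: "carnot_mult br (x,z) (t *\<^sub>R y, 0) = (x + t *\<^sub>R y, z + t *\<^sub>R br x y)" for x z t y
    by (simp add: carnot_mult_def bilinear_rmul[OF bl])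
  have HA: "affine_fun_real (\<lambda>t. f (x + t *\<^sub>R y, z + t *\<^sub>R br x y))" for x z y
  proof -
    have "affine_fun_real (\<lambda>t. f (carnot_mult br (x,z) (t *\<^sub>R y, 0)))"
      using assms(2) unfolding h_affine_def by blast
    then show ?thesis by (simp add: cm)
  qed
  define l where "l x z = f (x,z) - f (x,0)" for x z
  have l_lin: "linear (l x)" for x
  proof -
    have "linear (\<lambda>z. f (x,z) - f (x,0))"
      by (rule lines_linear[where g = "\<lambda>z. f (x,z)", simplified])
         (use assms(3) in \<open>auto simp: V2_affine_def\<close>)
    then show ?thesis unfolding l_def by (simp add: fun_eq_iff)
  qed
  have l_aff: "affine_fun_real (\<lambda>t. l (x + t *\<^sub>R y) z)" for x y z
  proof -
    have "affine_fun_real (\<lambda>t. f (x + t *\<^sub>R y, z + t *\<^sub>R br x y) - f (x + t *\<^sub>R y, 0 + t *\<^sub>R br x y))"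
      by (rule aff_diff[OF HA HA])
    moreover have "f (p, z + v) - f (p, 0 + v) = l p z" for p v
      using linear_add[OF l_lin[of p], of z v] unfolding l_def by simp
    ultimately show ?thesis by simp
  qed
  define B where "B x z = l x z - l 0 z" for x z
  define mu where "mu = l 0"
  define c where "c x = f (x,0)" for x
  have Bx: "linear (\<lambda>x. B x z)" for z
    unfolding B_def by (rule lines_linear[where g = "\<lambda>x. l x z"]) (rule l_aff)
  have Bz: "linear (B x)" for x
  proof -
    have "linear (\<lambda>z. l x z - l 0 z)" by (rule linear_compose_sub[OF l_lin l_lin])
    then show ?thesis unfolding B_def by (simp add: fun_eq_iff)
  qed
  have bB: "bilinear B" unfolding bilinear_def using Bx Bz by (simp add: fun_eq_iff) 
  have mu_lin: "linear mu" unfolding mu_def by (rule l_lin)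
  have fdec: "f (x,z) = c x + B x z + mu z" for x z
    by (simp add: B_def mu_def c_def l_def)
  define T where "T y p = B y (br p y)" for y p
  have hc: "f (p + t *\<^sub>R y, 0 + t *\<^sub>R br p y) - t * (B p (br p y) + mu (br p y))
     = c (p + t *\<^sub>R y) + t * t * T y p" for p y t
    unfolding fdec T_def
    by (simp add: bilinear_ladd[OF bB] bilinear_lmul[OF bB] bilinear_rmul[OF bB]
        linear_scale[OF mu_lin] algebra_simps)
  have haff: "affine_fun_real (\<lambda>t. c (p + t *\<^sub>R y) + t * t * T y p)" for p y
  proof -
    have "affine_fun_real (\<lambda>t. f (p + t *\<^sub>R y, 0 + t *\<^sub>R br p y) - (B p (br p y) + mu (br p y)) * t)"
      by (rule aff_sub_lin[OF HA])
    then show ?thesis using hc by (simp add: mult.commute)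
  qed
  have D: "c (p + y) + c (p - y) - 2 * c p = -2 * T y p" for p y
  proof -
    have a1: "c (p + 1 *\<^sub>R y) + 1 * 1 * T y p = c (p + 0 *\<^sub>R y) + 0 * 0 * T y p + 1 * ((c (p + 1 *\<^sub>R y) + 1 * 1 * T y p) - (c (p + 0 *\<^sub>R y) + 0 * 0 * T y p))"
      by simp
    have a2: "c (p + (-1) *\<^sub>R y) + (-1) * (-1) * T y p = c (p + 0 *\<^sub>R y) + 0 * 0 * T y p + (-1) * ((c (p + 1 *\<^sub>R y) + 1 * 1 * T y p) - (c (p + 0 *\<^sub>R y) + 0 * 0 * T y p))"
      using aff_eval[OF haff[of p y], of "-1"] by simp
    show ?thesis using a2 by simp
  qed
  have Y0: "B w (br u w) = 0" for u w
  proof -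
    define P where "P i j = of_int i *\<^sub>R u + of_int j *\<^sub>R w" for i j :: int
    define X where "X = B u (br u w)"
    define Y where "Y = B w (br u w)"
    have swu: "br w u = - br u w" by (rule sk)
    have Tf: "T (P a b) (P i j) = (of_int i * of_int b - of_int j * of_int a) * (of_int a * X + of_int b * Y)" for a b i j
      unfolding T_def P_def X_def Y_def
      by (simp add: bilinear_ladd[OF bl] bilinear_radd[OF bl] bilinear_lmul[OF bl] bilinear_rmul[OF bl]
          bilinear_ladd[OF bB] bilinear_radd[OF bB] bilinear_lmul[OF bB] bilinear_rmul[OF bB]
          bilinear_rneg[OF bB] bilinear_rsub[OF bB] brr swu algebra_simps)
    have Pa: "P i j + P a b = P (i + a) (j + b)" for i j a b
      unfolding P_def by (simp add: algebra_simps)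
    have Ps: "P i j - P a b = P (i - a) (j - b)" for i j a b
      unfolding P_def by (simp add: algebra_simps)
    have DP: "c (P (i + a) (j + b)) + c (P (i - a) (j - b)) - 2 * c (P i j)
       = -2 * ((of_int i * of_int b - of_int j * of_int a) * (of_int a * X + of_int b * Y))" for i j a b
      using D[of "P i j" "P a b"] unfolding Pa Ps Tf .
    note e1 = DP[of "-1" 1 0 "-1"]
    note e2 = DP[of "-1" 1 "-2" 0]
    note e3 = DP[of "-2" 0 "-1" 1]
    note e4 = DP[of "-2" 0 0 1]
    note e5 = DP[of "-1" 1 "-1" 0]
    note e6 = DP[of "-1" 0 "-1" 1]
    note e7 = DP[of "-1" 1 "-1" "-1"]
    have "6 * Y = 0" using e1 e2 e3 e4 e5 e6 e7 by simp
    then show ?thesis unfolding Y_def by simp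
  qed
  have T0: "T y p = 0" for y p unfolding T_def by (rule Y0)
  have cl: "linear (\<lambda>x. c x - c 0)"
    by (rule lines_linear) (use haff T0 in simp)
  define a where "a q = (c (fst q) - c 0) + mu (snd q) + c 0" for q :: "'a \<times> 'b"
  have "affine_map a"
    unfolding affine_map_def
  proof (intro exI conjI allI)
    show "linear (\<lambda>q. (c (fst q) - c 0) + mu (snd q))"
      using cl mu_lin by (auto simp: linear_iff algebra_simps)
    show "a q = (c (fst q) - c 0) + mu (snd q) + c 0" for q by (simp add: a_def)
  qed
  moreover have "B x (br x x') = 0" for x x'
    using T0[of x x'] unfolding T_def by (metis sk bilinear_rneg[OF bB] neg_equal_0_iff_equal)
  moreover have "f (x, z) = a (x, z) + B x z" for x z
    by (simp add: fdec a_def)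
  ultimately show ?thesis using bB by blast
qed

end
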